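(* Let $n \ge 2$ be an integer and let $\mathcal{C}(I,n)$ denote the class of all vectors $\mathbf{X}=(X_1,\ldots,X_n)$ of independent random variables, each taking values in $[0,1]$. For $\mathbf{X}\in\mathcal{C}(I,n)$ put $U(\mathbf{X})=\max_{1\le i\le n} E X_i$ and $M(\mathbf{X})=E(\max_{1\le i\le n} X_i)$. Then $$\{(x,y)\mid x=U(\mathbf{X}),\ y=M(\mathbf{X}),\ \mathbf{X}\in\mathcal{C}(I,n)\} = \{(x,y)\mid 0\le x\le 1,\ x\le y\le 1-(1-x)^n\}.$$
   Context: $U(\mathbf{X})$ is the expected return of an observer who only knows the expectations of the $X_i$; $M(\mathbf{X})$ is the expected return of an observer (the "prophet") who sees all realizations and picks the largest. The set on the left is called the prophet region of $\mathcal{C}(I,n)$ for this pair of information levels. *)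

theory Defs
  imports "HOL-Probability.Probability"
begin

definition in_class_CI :: "'a measure \<Rightarrow> nat \<Rightarrow> (nat \<Rightarrow> 'a \<Rightarrow> real) \<Rightarrow> bool" where
  "in_class_CI M n X \<longleftrightarrow>
     prob_space M \<and>
     prob_space.indep_vars M (\<lambda>_. borel) X {..<n} \<and>
     (\<forall>i<n. \<forall>\<omega>\<in>space M. X i \<omega> \<in> {0..1})"

definition U_val :: "'a measure \<Rightarrow> nat \<Rightarrow> (nat \<Rightarrow> 'a \<Rightarrow> real) \<Rightarrow> real" where
  "U_val M n X = Max ((\<lambda>i. prob_space.expectation M (X i)) ` {..<n})"

definition M_val :: "'a measure \<Rightarrow> nat \<Rightarrow> (nat \<Rightarrow> 'a \<Rightarrow> real) \<Rightarrow> real" where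
  "M_val M n X = prob_space.expectation M (\<lambda>\<omega>. Max ((\<lambda>i. X i \<omega>) ` {..<n}))"

definition prophet_region :: "'a itself \<Rightarrow> nat \<Rightarrow> (real \<times> real) set" where
  "prophet_region _ n =
     {(U_val M n X, M_val M n X) | (M :: 'a measure) X. in_class_CI M n X}"

end

theory Submission
  imports Defs
begin

lemma prod_le_member:
  fixes a :: "nat \<Rightarrow> real"
  assumes "finite I" "k \<in> I" "\<And>i. i \<in> I \<Longrightarrow> 0 \<le> a i \<and> a i \<le> 1"
  shows "(\<Prod>i\<in>I. a i) \<le> a k"
proof -
  have "(\<Prod>i\<in>I. a i) = a k * (\<Prod>i\<in>I - {k}. a i)"
    using assms by (simp add: prod.remove)
  also have "\<dots> \<le> a k * 1"
    using assms by (intro mult_left_mono prod_le_1) auto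
  finally show ?thesis by simp
qed

lemma part1:
  assumes n: "n \<ge> 2" and C: "in_class_CI M n X"
  shows "0 \<le> U_val M n X \<and> U_val M n X \<le> 1 \<and> U_val M n X \<le> M_val M n X
     \<and> M_val M n X \<le> 1 - (1 - U_val M n X) ^ n"
proof -
  interpret prob_space M using C unfolding in_class_CI_def by auto
  have ind: "indep_vars (\<lambda>_. borel) X {..<n}" and rng: "\<And>i \<omega>. i < n \<Longrightarrow> \<omega> \<in> space M \<Longrightarrow> X i \<omega> \<in> {0..1}"
    using C unfolding in_class_CI_def by auto
  have rv[measurable]: "X i \<in> borel_measurable M" if "i < n" for i
    using ind that unfolding indep_vars_def by auto
  have int: "integrable M (X i)" if "i < n" for i
    using rng that by (intro integrable_const_bound[where B=1]) (auto intro!: rv)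
  define e where "e i = expectation (X i)" for i
  have e01: "0 \<le> e i \<and> e i \<le> 1" if "i < n" for i
  proof -
    have "0 \<le> e i" unfolding e_def using rng that by (intro integral_nonneg_AE) auto
    moreover have "e i \<le> expectation (\<lambda>_. 1)" unfolding e_def using rng that int
      by (intro integral_mono_AE) auto
    ultimately show ?thesis by (simp add: prob_space)
  qed
  have ne: "{..<n} \<noteq> {}"
  proof -
    have "0 \<in> {..<n}" using n by simp
    thus ?thesis by blast
  qed
  have U: "U_val M n X = Max (e ` {..<n})" unfolding U_val_def e_def by simp
  obtain j where j: "j < n" "U_val M n X = e j"
  proof -
    have "Max (e ` {..<n}) \<in> e ` {..<n}" using ne by (intro Max_in) auto
    thus ?thesis using that U by auto
  qed
  have ge: "e i \<le> U_val M n X" if "i < n" for i using U that by simp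
  define m where "m \<omega> = Max ((\<lambda>i. X i \<omega>) ` {..<n})" for \<omega>
  have mrv[measurable]: "m \<in> borel_measurable M" unfolding m_def
    by (intro borel_measurable_Max) auto
  have Mv: "M_val M n X = expectation m" unfolding M_val_def m_def by simp
  have mge: "X i \<omega> \<le> m \<omega>" if "i < n" for i \<omega> unfolding m_def using that by simp
  have m01: "0 \<le> m \<omega> \<and> m \<omega> \<le> 1" if "\<omega> \<in> space M" for \<omega>
  proof -
    have "m \<omega> \<in> (\<lambda>i. X i \<omega>) ` {..<n}" unfolding m_def using ne by (intro Max_in) auto
    then obtain k where "k < n" "m \<omega> = X k \<omega>" by auto
    then show ?thesis using rng that by auto
  qed
  have mint: "integrable M m"
    using m01 by (intro integrable_const_bound[where B=1]) auto
  have "e j \<le> expectation m" unfolding e_def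
    using int j mint mge by (intro integral_mono) auto
  hence xy: "U_val M n X \<le> M_val M n X" using j Mv by simp
  have ind2: "indep_vars (\<lambda>_. borel) (\<lambda>i \<omega>. 1 - X i \<omega>) {..<n}"
    by (rule indep_vars_compose2[OF ind]) auto
  have int2: "integrable M (\<lambda>\<omega>. 1 - X i \<omega>)" if "i < n" for i
    using int that by auto
  have prodE: "expectation (\<lambda>\<omega>. \<Prod>i\<in>{..<n}. 1 - X i \<omega>) = (\<Prod>i\<in>{..<n}. 1 - e i)"
  proof -
    have "expectation (\<lambda>\<omega>. \<Prod>i\<in>{..<n}. 1 - X i \<omega>) = (\<Prod>i\<in>{..<n}. expectation (\<lambda>\<omega>. 1 - X i \<omega>))"
      by (rule indep_vars_lebesgue_integral[OF _ ind2]) (auto intro: int2)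
    also have "\<dots> = (\<Prod>i\<in>{..<n}. 1 - e i)"
      using int by (intro prod.cong) (auto simp: e_def prob_space)
    finally show ?thesis .
  qed
  have pint: "integrable M (\<lambda>\<omega>. \<Prod>i\<in>{..<n}. 1 - X i \<omega>)"
    by (rule indep_vars_integrable[OF _ ind2]) (auto intro: int2)
  have pw: "m \<omega> \<le> 1 - (\<Prod>i\<in>{..<n}. 1 - X i \<omega>)" if "\<omega> \<in> space M" for \<omega>
  proof -
    have "m \<omega> \<in> (\<lambda>i. X i \<omega>) ` {..<n}" unfolding m_def using ne by (intro Max_in) auto
    then obtain k where k: "k < n" "m \<omega> = X k \<omega>" by auto
    have "(\<Prod>i\<in>{..<n}. 1 - X i \<omega>) \<le> 1 - X k \<omega>"
      using k rng that by (intro prod_le_member) auto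
    thus ?thesis using k by simp
  qed
  have "expectation m \<le> expectation (\<lambda>\<omega>. 1 - (\<Prod>i\<in>{..<n}. 1 - X i \<omega>))"
    using mint pint pw by (intro integral_mono) auto
  also have "\<dots> = 1 - (\<Prod>i\<in>{..<n}. 1 - e i)"
    using pint prodE by (simp add: prob_space)
  also have "\<dots> \<le> 1 - (\<Prod>i\<in>{..<n}. 1 - U_val M n X)"
    using e01 ge j by (intro diff_left_mono prod_mono) auto
  finally have yub: "M_val M n X \<le> 1 - (1 - U_val M n X) ^ n" using Mv by simp
  show ?thesis using xy yub e01 j by auto
qed


lemma choose_p:
  fixes x y :: real
  assumes n: "n \<ge> 2" and x: "0 \<le> x" "x \<le> 1" "x \<le> y" "y \<le> 1 - (1 - x) ^ n"
  obtains p where "0 \<le> p" "p \<le> x" "(1 - x) * (1 - p) ^ (n - 1) = 1 - y"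
proof (cases "x = 1")
  case True
  then have "y = 1" using x n by (auto simp: power_0_left)
  then show ?thesis using that[of 0] True by simp
next
  case False
  hence x1: "x < 1" using x by simp
  define r where "r = (1 - y) / (1 - x)"
  have k: "0 < n - 1" using n by simp
  have r1: "r \<le> 1" unfolding r_def using x1 x by (simp add: divide_le_eq_1)
  have "(1 - x) * (1 - x) ^ (n - 1) = (1 - x) ^ n"
    using n by (cases n) simp_all
  hence "(1 - x) * (1 - x) ^ (n - 1) \<le> 1 - y" using x by simp
  hence r0: "(1 - x) ^ (n - 1) \<le> r" unfolding r_def using x1 by (simp add: pos_le_divide_eq mult.commute)
  have "0 \<le> (1 - x) ^ (n - 1)" using x by simp
  hence rnn: "0 \<le> r" using r0 by linarith
  define p where "p = 1 - root (n - 1) r"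
  have "root (n - 1) r \<le> 1" using real_root_le_mono[OF k r1] k by simp
  moreover have "1 - x \<le> root (n - 1) r"
    using real_root_le_mono[OF k r0] real_root_power_cancel[OF k, of "1 - x"] x by simp
  moreover have "(1 - p) ^ (n - 1) = r" unfolding p_def using k rnn by simp
  ultimately show ?thesis using that[of p] x1 unfolding p_def r_def by auto
qed

lemma part2:
  fixes x y :: real
  assumes n: "n \<ge> 2" and x: "0 \<le> x" "x \<le> 1" "x \<le> y" "y \<le> 1 - (1 - x) ^ n"
  shows "(x, y) \<in> prophet_region TYPE(nat \<Rightarrow> real) n"
proof -
  obtain p where p: "0 \<le> p" "p \<le> x" "(1 - x) * (1 - p) ^ (n - 1) = 1 - y"
    using choose_p[OF assms] by blast
  define P where "P = map_pmf (\<lambda>b. if b then 1 else 0 :: real) (bernoulli_pmf p)"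
  define Q where "Q = Pi_pmf {..<n} 0 (\<lambda>_. P)"
  define Y where "Y i t = (if i = 0 then x else (if t = 1 then 1 else 0 :: real))" for i :: nat and t :: real
  define X where "X i \<omega> = Y i (\<omega> i)" for i :: nat and \<omega> :: "nat \<Rightarrow> real"
  have Y01: "0 \<le> Y i t \<and> Y i t \<le> 1" for i t unfolding Y_def using x by auto
  have C: "in_class_CI (measure_pmf Q) n X"
    unfolding in_class_CI_def
  proof (intro conjI)
    show "prob_space (measure_pmf Q)" by (rule measure_pmf.prob_space_axioms)
    show "prob_space.indep_vars (measure_pmf Q) (\<lambda>_. borel) X {..<n}"
      unfolding X_def Q_def
      by (rule prob_space.indep_vars_compose2[OF measure_pmf.prob_space_axioms indep_vars_Pi_pmf]) auto
    show "\<forall>i<n. \<forall>\<omega>\<in>space (measure_pmf Q). X i \<omega> \<in> {0..1}"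
      using Y01 unfolding X_def by auto
  qed
  have p1: "p \<le> 1" using p x by simp
  have EP: "measure_pmf.expectation P f = f 1 * p + f 0 * (1 - p)" for f :: "real \<Rightarrow> real"
    unfolding P_def using p p1 by simp
  have EX: "measure_pmf.expectation Q (X i) = (if i = 0 then x else p)" if "i < n" for i
  proof -
    have "measure_pmf.expectation Q (X i) = measure_pmf.expectation (map_pmf (\<lambda>f. f i) Q) (Y i)"
      unfolding X_def by simp
    also have "map_pmf (\<lambda>f. f i) Q = P" unfolding Q_def using that by (simp add: Pi_pmf_component)
    finally show ?thesis using EP[of "Y i"] unfolding Y_def by (auto simp: algebra_simps)
  qed
  have U: "U_val (measure_pmf Q) n X = x"
    unfolding U_val_def
  proof (rule Max_eqI)
    show "x \<in> (\<lambda>i. measure_pmf.expectation Q (X i)) ` {..<n}"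
      using EX[of 0] n by (intro image_eqI[of _ _ 0]) auto
  qed (use EX p in auto)
  have pw: "Max ((\<lambda>i. X i \<omega>) ` {..<n}) = 1 - (\<Prod>i\<in>{..<n}. 1 - Y i (\<omega> i))" for \<omega>
  proof (cases "\<exists>k\<in>{1..<n}. \<omega> k = 1")
    case True
    then obtain k where k: "k \<in> {1..<n}" "\<omega> k = 1" by blast
    have "(\<Prod>i\<in>{..<n}. 1 - Y i (\<omega> i)) = 0"
      using k by (intro prod_zero bexI[of _ k]) (auto simp: Y_def)
    moreover have "Max ((\<lambda>i. X i \<omega>) ` {..<n}) = 1"
    proof (rule Max_eqI)
      show "1 \<in> (\<lambda>i. X i \<omega>) ` {..<n}" using k by (intro image_eqI[of _ _ k]) (auto simp: X_def Y_def)
    qed (use Y01 in \<open>auto simp: X_def\<close>)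
    ultimately show ?thesis by simp
  next
    case False
    have z: "Y i (\<omega> i) = 0" if "i \<in> {1..<n}" for i using False that by (auto simp: Y_def)
    have "(\<Prod>i\<in>{..<n}. 1 - Y i (\<omega> i)) = (1 - Y 0 (\<omega> 0)) * (\<Prod>i\<in>{..<n} - {0}. 1 - Y i (\<omega> i))"
      using n by (intro prod.remove) auto
    also have "(\<Prod>i\<in>{..<n} - {0}. 1 - Y i (\<omega> i)) = 1"
      using z by (intro prod.neutral) auto
    finally have pr: "(\<Prod>i\<in>{..<n}. 1 - Y i (\<omega> i)) = 1 - x" by (simp add: Y_def)
    have "Max ((\<lambda>i. X i \<omega>) ` {..<n}) = x"
    proof (rule Max_eqI)
      show "x \<in> (\<lambda>i. X i \<omega>) ` {..<n}" using n by (intro image_eqI[of _ _ 0]) (auto simp: X_def Y_def)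
      fix t assume "t \<in> (\<lambda>i. X i \<omega>) ` {..<n}"
      then obtain i where "i < n" "t = X i \<omega>" by auto
      then show "t \<le> x" using z[of i] x by (cases "i = 0") (auto simp: X_def Y_def)
    qed auto
    then show ?thesis using pr by simp
  qed
  have intY: "integrable (measure_pmf P) (\<lambda>v. 1 - Y i v)" for i
    using Y01 by (intro measure_pmf.integrable_const_bound[where B=1]) auto
  have intQ: "integrable (measure_pmf Q) (\<lambda>\<omega>. \<Prod>i\<in>{..<n}. 1 - Y i (\<omega> i))"
  proof (intro measure_pmf.integrable_const_bound[where B=1] AE_I2)
    fix \<omega> :: "nat \<Rightarrow> real"
    have "0 \<le> (\<Prod>i\<in>{..<n}. 1 - Y i (\<omega> i))" using Y01 by (intro prod_nonneg) auto
    moreover have "(\<Prod>i\<in>{..<n}. 1 - Y i (\<omega> i)) \<le> 1" using Y01 by (intro prod_le_1) auto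
    ultimately show "norm (\<Prod>i\<in>{..<n}. 1 - Y i (\<omega> i)) \<le> 1" by simp
  qed simp
  have "M_val (measure_pmf Q) n X = measure_pmf.expectation Q (\<lambda>\<omega>. 1 - (\<Prod>i\<in>{..<n}. 1 - Y i (\<omega> i)))"
    unfolding M_val_def using pw by simp
  also have "\<dots> = 1 - measure_pmf.expectation Q (\<lambda>\<omega>. \<Prod>i\<in>{..<n}. 1 - Y i (\<omega> i))"
    using intQ by (simp add: measure_pmf.prob_space)
  also have "measure_pmf.expectation Q (\<lambda>\<omega>. \<Prod>i\<in>{..<n}. 1 - Y i (\<omega> i))
      = (\<Prod>i\<in>{..<n}. measure_pmf.expectation P (\<lambda>v. 1 - Y i v))"
    unfolding Q_def using Y01 intY by (intro expectation_prod_Pi_pmf) auto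
  also have "\<dots> = (\<Prod>i\<in>{..<n}. if i = 0 then 1 - x else 1 - p)"
    by (intro prod.cong refl) (simp add: EP Y_def algebra_simps)
  also have "\<dots> = (1 - x) * (\<Prod>i\<in>{..<n} - {0}. if i = 0 then 1 - x else 1 - p)"
    using n by (subst prod.remove[of _ 0]) auto
  also have "(\<Prod>i\<in>{..<n} - {0}. if i = 0 then 1 - x else 1 - p) = (\<Prod>i\<in>{..<n} - {0}. 1 - p)"
    by (intro prod.cong) auto
  also have "\<dots> = (1 - p) ^ (n - 1)" using n by simp
  finally have My: "M_val (measure_pmf Q) n X = y" using p by simp
  show ?thesis unfolding prophet_region_def
    by (rule CollectI, rule exI[of _ "measure_pmf Q"], rule exI[of _ X]) (simp add: C U My)
qed

lemma sub_gen:
  assumes "n \<ge> 2"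
  shows "prophet_region TYPE('b) n \<subseteq> {(x, y). 0 \<le> x \<and> x \<le> 1 \<and> x \<le> y \<and> y \<le> 1 - (1 - x) ^ n}"
proof
  fix z assume "z \<in> prophet_region TYPE('b) n"
  then obtain M :: "'b measure" and X where z: "z = (U_val M n X, M_val M n X)" "in_class_CI M n X"
    unfolding prophet_region_def by blast
  show "z \<in> {(x, y). 0 \<le> x \<and> x \<le> 1 \<and> x \<le> y \<and> y \<le> 1 - (1 - x) ^ n}"
    using part1[OF assms z(2)] z(1) by simp
qed

theorem theorem1:
  fixes n :: nat
  assumes "n \<ge> 2"
  shows "prophet_region TYPE('a) n \<subseteq> {(x, y). 0 \<le> x \<and> x \<le> 1 \<and> x \<le> y \<and> y \<le> 1 - (1 - x) ^ n}
       \<and> prophet_region TYPE(nat \<Rightarrow> real) n = {(x, y). 0 \<le> x \<and> x \<le> 1 \<and> x \<le> y \<and> y \<le> 1 - (1 - x) ^ n}"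
proof -
  let ?S = "{(x, y). 0 \<le> x \<and> x \<le> 1 \<and> x \<le> y \<and> y \<le> 1 - (1 - x) ^ n} :: (real \<times> real) set"
  have A: "prophet_region TYPE('a) n \<subseteq> ?S" by (rule sub_gen[OF assms])
  have B: "prophet_region TYPE(nat \<Rightarrow> real) n \<subseteq> ?S" by (rule sub_gen[OF assms])
  have C: "?S \<subseteq> prophet_region TYPE(nat \<Rightarrow> real) n"
  proof (rule subsetI)
    fix z assume "z \<in> ?S"
    then obtain x y where "z = (x, y)" "0 \<le> x" "x \<le> 1" "x \<le> y" "y \<le> 1 - (1 - x) ^ n"
      by (cases z) auto
    then show "z \<in> prophet_region TYPE(nat \<Rightarrow> real) n" using part2[OF assms] by simp
  qed
  show ?thesis by (intro conjI A subset_antisym B C)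
qed

end
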